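(* Let $0<\alpha<\eta$ with $\alpha\notin\mathbb N$. Let $D\subseteq\mathbb R^d$ be such that for all $x,y\in D$ with $x\ne y$ it holds $y+\sum_{j=1}^d(\rho_j\,d(x,y))^{\mathfrak s_j}\mathbf e_j\in D$ for all $\rho=(\rho_1,\dots,\rho_d)\in\mathbb N^d$. Assume $U$ is a germ over $D$ with $\|U\|_{G^\eta(D)}+[U]_{G^{\eta,\alpha}(D)}<\infty$. Then for all $R>0$, $$\sup_{x\in D}[U_x]_{C^\alpha(D\cap B_R(x))}\lesssim_{\mathfrak s,d,\eta,\alpha}\big(\|U\|_{G^\eta(D)}+[U]_{G^{\eta,\alpha}(D)}\big)R^{\eta-\alpha}.$$
   Context: Fix a scaling $\mathfrak s\in\mathbb N^d$; $\mathbb N=\{1,2,\dots\}$; for $\beta\in\mathbb N_0^d$, $|\beta|:=\sum_i\mathfrak s_i\beta_i$; $d(x,y):=\sum_i|x_i-y_i|^{1/\mathfrak s_i}$, $B_R(x)$ the open ball for $d$, $\mathcal P_k$ the polynomials $\sum_{|\beta|\le k}c_\beta z^\beta$. A germ over $D$ is a family $U=(U_x)_{x\in D}$ of continuous $U_x:D\to\mathbb C$; $\|U\|_{G^\eta(D)}$ is the infimum of $M>0$ with $|U_x(y)|\le M\,d(x,y)^\eta$ for all $x,y\in D$; $[U]_{G^{\eta,\alpha}(D)}$ is the infimum of $M>0$ such that for all $x,y\in D$ there is $P\in\mathcal P_{\lfloor\eta\rfloor}$ with $|(U_x-U_y-P)(z)|\le M\,d(y,z)^\alpha(d(x,y)+d(y,z))^{\eta-\alpha}$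 for all $z\in D$. For $A\subseteq\mathbb R^d$ and a function $f$ on $A$, $[f]_{C^\alpha(A)}$ is the infimum of all $M>0$ such that for every $y\in A$ there is $P\in\mathcal P_{\lfloor\alpha\rfloor}$ with $|f(z)-P(z)|\le M\,d(z,y)^\alpha$ for all $z\in A$. *)

theory Defs
  imports "HOL-Analysis.Analysis"
begin

definition sdist :: "('n::finite \<Rightarrow> nat) \<Rightarrow> real^'n \<Rightarrow> real^'n \<Rightarrow> real" where
  "sdist s x y = (\<Sum>i\<in>UNIV. \<bar>x$i - y$i\<bar> powr (1 / real (s i)))"

definition sball :: "('n::finite \<Rightarrow> nat) \<Rightarrow> real^'n \<Rightarrow> real \<Rightarrow> (real^'n) set" where
  "sball s x R = {y. sdist s x y < R}"

definition sdeg :: "('n::finite \<Rightarrow> nat) \<Rightarrow> ('n \<Rightarrow> nat) \<Rightarrow> nat" where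
  "sdeg s \<beta> = (\<Sum>i\<in>UNIV. s i * \<beta> i)"

definition spolys :: "('n::finite \<Rightarrow> nat) \<Rightarrow> nat \<Rightarrow> (real^'n \<Rightarrow> complex) set" where
  "spolys s k = {p. \<exists>c :: ('n \<Rightarrow> nat) \<Rightarrow> complex.
      p = (\<lambda>z. \<Sum>\<beta>\<in>{\<beta>. sdeg s \<beta> \<le> k}. c \<beta> * (\<Prod>i\<in>UNIV. complex_of_real (z$i) ^ \<beta> i))}"

definition germ :: "(real^'n::finite) set \<Rightarrow> (real^'n \<Rightarrow> real^'n \<Rightarrow> complex) \<Rightarrow> bool" where
  "germ D U \<longleftrightarrow> (\<forall>x\<in>D. continuous_on D (U x))"

text \<open>Infima are taken in the extended reals (infimum of the empty set = infinity).\<close>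
definition germ_norm :: "('n::finite \<Rightarrow> nat) \<Rightarrow> real \<Rightarrow> (real^'n) set
    \<Rightarrow> (real^'n \<Rightarrow> real^'n \<Rightarrow> complex) \<Rightarrow> ereal" where
  "germ_norm s \<eta> D U = Inf {ereal M | M. M > 0 \<and>
      (\<forall>x\<in>D. \<forall>y\<in>D. cmod (U x y) \<le> M * sdist s x y powr \<eta>)}"

definition germ_semi :: "('n::finite \<Rightarrow> nat) \<Rightarrow> real \<Rightarrow> real \<Rightarrow> (real^'n) set
    \<Rightarrow> (real^'n \<Rightarrow> real^'n \<Rightarrow> complex) \<Rightarrow> ereal" where
  "germ_semi s \<eta> \<alpha> D U = Inf {ereal M | M. M > 0 \<and>
      (\<forall>x\<in>D. \<forall>y\<in>D. \<exists>P\<in>spolys s (nat \<lfloor>\<eta>\<rfloor>). \<forall>z\<in>D.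
         cmod (U x z - U y z - P z)
           \<le> M * sdist s y z powr \<alpha> * (sdist s x y + sdist s y z) powr (\<eta> - \<alpha>))}"

definition holder_semi :: "('n::finite \<Rightarrow> nat) \<Rightarrow> real \<Rightarrow> (real^'n \<Rightarrow> complex)
    \<Rightarrow> (real^'n) set \<Rightarrow> ereal" where
  "holder_semi s \<alpha> f A = Inf {ereal M | M. M > 0 \<and>
      (\<forall>y\<in>A. \<exists>P\<in>spolys s (nat \<lfloor>\<alpha>\<rfloor>). \<forall>z\<in>A.
         cmod (f z - P z) \<le> M * sdist s z y powr \<alpha>)}"

definition admissible_domain :: "('n::finite \<Rightarrow> nat) \<Rightarrow> (real^'n) set \<Rightarrow> bool" where
  "admissible_domain s D \<longleftrightarrow> (\<forall>x\<in>D. \<forall>y\<in>D. x \<noteq> y \<longrightarrow>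
      (\<forall>\<rho> :: 'n \<Rightarrow> nat. (\<forall>j. 1 \<le> \<rho> j) \<longrightarrow>
         y + (\<chi> j. (real (\<rho> j) * sdist s x y) ^ s j) \<in> D))"

end

theory Submission
  imports Defs "HOL-Computational_Algebra.Polynomial"
begin

lemma lagrange_dual:
  fixes nd :: "nat \<Rightarrow> real" and k :: nat
  assumes inj: "inj_on nd {1..k+1}"
  shows "\<exists>l::nat\<Rightarrow>nat\<Rightarrow>real. \<forall>b\<le>k. \<forall>c\<le>k.
     (\<Sum>r=1..k+1. nd r ^ c * l r b) = (if b = c then 1 else 0)"
proof -
  define I where "I = {1..k+1}"
  define L where "L r = (\<Prod>q\<in>I-{r}. smult (1/(nd r - nd q)) [:-nd q, 1:])" for r
  have degL: "degree (L r) \<le> k" if "r \<in> I" for r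
  proof -
    have "degree (L r) \<le> (\<Sum>q\<in>I-{r}. degree (smult (1/(nd r - nd q)) [:-nd q, 1:]))"
      unfolding L_def using degree_prod_sum_le[of "I-{r}" "\<lambda>q. smult (1/(nd r - nd q)) [:-nd q, 1:]"] by (simp add: I_def o_def)
    also have "\<dots> \<le> (\<Sum>q\<in>I-{r}. 1)"
      by (rule sum_mono) simp
    also have "\<dots> = k" using that by (simp add: I_def)
    finally show ?thesis .
  qed
  have polyLx: "poly (L r) x = (\<Prod>q'\<in>I-{r}. (1/(nd r - nd q')) * (x - nd q'))" for r x
    unfolding L_def poly_prod by (rule prod.cong) (auto simp: diff_divide_distrib)
  have polyL: "poly (L r) (nd q) = (if q = r then 1 else 0)" if "r \<in> I" "q \<in> I" for r q
  proof (cases "q = r")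
    case True
    have "poly (L r) (nd q) = (\<Prod>q'\<in>I-{r}. (1/(nd r - nd q')) * (nd r - nd q'))"
      unfolding polyLx using True by simp
    also have "\<dots> = 1"
    proof (rule prod.neutral, intro ballI)
      fix q' assume "q' \<in> I - {r}"
      then have "nd r \<noteq> nd q'" using inj_onD[OF inj, of r q'] that unfolding I_def by auto
      then show "1 / (nd r - nd q') * (nd r - nd q') = 1" by simp
    qed
    finally show ?thesis using True by simp
  next
    case False
    have "poly (L r) (nd q) = (\<Prod>q'\<in>I-{r}. (1/(nd r - nd q')) * (nd q - nd q'))"
      unfolding polyLx by simp
    also have "\<dots> = 0"
      by (rule prod_zero) (use False that in \<open>auto simp: I_def\<close>)
    finally show ?thesis using False by simp
  qed
  have key: "coeff (monom 1 c) b = (\<Sum>r\<in>I. nd r ^ c * coeff (L r) b)" if "c \<le> k" for b c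
  proof -
    define g where "g = monom 1 c - (\<Sum>r\<in>I. smult (nd r ^ c) (L r))"
    have dg: "degree g \<le> k"
    proof -
      have "degree (\<Sum>r\<in>I. smult (nd r ^ c) (L r)) \<le> k"
      proof (rule degree_sum_le)
        show "finite I" by (simp add: I_def)
        fix r assume "r \<in> I"
        then show "degree (smult (nd r ^ c) (L r)) \<le> k"
          using degL[OF \<open>r \<in> I\<close>] degree_smult_le[of "nd r ^ c" "L r"] by linarith
      qed
      moreover have "degree (monom (1::real) c) \<le> k" using degree_monom_le[of "1::real" c] that by linarith
      ultimately show ?thesis unfolding g_def by (rule degree_diff_le[rotated])
    qed
    have finI: "finite I" by (simp add: I_def)
    have roots: "poly g (nd q) = 0" if "q \<in> I" for q
    proof -
      have "(\<Sum>r\<in>I. nd r ^ c * poly (L r) (nd q)) = (\<Sum>r\<in>I. if r = q then nd q ^ c else 0)"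
      proof (rule sum.cong)
        fix r assume "r \<in> I"
        then show "nd r ^ c * poly (L r) (nd q) = (if r = q then nd q ^ c else 0)"
          using polyL[OF \<open>r \<in> I\<close> that] by auto
      qed simp
      also have "\<dots> = nd q ^ c" using that finI by (simp add: sum.delta')
      finally have "(\<Sum>r\<in>I. nd r ^ c * poly (L r) (nd q)) = nd q ^ c" .
      moreover have "poly g (nd q) = nd q ^ c - (\<Sum>r\<in>I. nd r ^ c * poly (L r) (nd q))"
        unfolding g_def poly_diff poly_sum poly_smult poly_monom by simp
      ultimately show ?thesis by simp
    qed
    have "g = 0"
    proof (rule ccontr)
      assume "g \<noteq> 0"
      then have c1: "card {x. poly g x = 0} \<le> k" using card_poly_roots_bound[of g] dg by linarith
      have c2: "nd ` I \<subseteq> {x. poly g x = 0}" using roots by auto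
      have c3: "finite {x. poly g x = 0}" using poly_roots_finite \<open>g \<noteq> 0\<close> by blast
      have "card (nd ` I) \<le> card {x. poly g x = 0}" by (rule card_mono[OF c3 c2])
      moreover have "card (nd ` I) = k + 1" using inj unfolding I_def by (simp add: card_image)
      ultimately show False using c1 by linarith
    qed
    then have "coeff g b = 0" by simp
    moreover have "coeff g b = coeff (monom 1 c) b - (\<Sum>r\<in>I. nd r ^ c * coeff (L r) b)"
      unfolding g_def coeff_diff coeff_sum coeff_smult by (rule refl)
    ultimately show ?thesis by linarith
  qed
  show ?thesis
  proof (rule exI[of _ "\<lambda>r b. coeff (L r) b"], intro allI impI)
    fix b c :: nat assume "b \<le> k" "c \<le> k"
    have "coeff (monom (1::real) c) b = (if b = c then 1 else 0)" by (simp add: coeff_monom)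
    then show "(\<Sum>r=1..k+1. nd r ^ c * coeff (L r) b) = (if b = c then 1 else 0)"
      using key[OF \<open>c \<le> k\<close>, of b] unfolding I_def by linarith
  qed
qed

lemma tensor_interp:
  fixes nd :: "'n::finite \<Rightarrow> nat \<Rightarrow> real" and l :: "'n \<Rightarrow> nat \<Rightarrow> nat \<Rightarrow> real"
    and a :: "('n \<Rightarrow> nat) \<Rightarrow> complex"
  assumes dual: "\<And>j b c. b \<le> k \<Longrightarrow> c \<le> k \<Longrightarrow> (\<Sum>r=1..k+1. nd j r ^ c * l j r b) = (if b = c then 1 else 0)"
    and finB: "finite B" and Bk: "\<And>\<beta> i. \<beta> \<in> B \<Longrightarrow> \<beta> i \<le> k" and g: "\<gamma> \<in> B"
  shows "(\<Sum>\<rho>\<in>PiE UNIV (\<lambda>_. {1..k+1}). (\<Sum>\<beta>\<in>B. a \<beta> * (\<Prod>j\<in>UNIV. complex_of_real (nd j (\<rho> j)) ^ \<beta> j))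
            * (\<Prod>j\<in>UNIV. complex_of_real (l j (\<rho> j) (\<gamma> j)))) = a \<gamma>"
proof -
  define G where "G = PiE (UNIV::'n set) (\<lambda>_. {1..k+1})"
  have finG: "finite G" unfolding G_def by (intro finite_PiE) auto
  have "(\<Sum>\<rho>\<in>G. (\<Sum>\<beta>\<in>B. a \<beta> * (\<Prod>j\<in>UNIV. complex_of_real (nd j (\<rho> j)) ^ \<beta> j))
            * (\<Prod>j\<in>UNIV. complex_of_real (l j (\<rho> j) (\<gamma> j))))
      = (\<Sum>\<rho>\<in>G. \<Sum>\<beta>\<in>B. a \<beta> * (\<Prod>j\<in>UNIV. complex_of_real (nd j (\<rho> j) ^ \<beta> j * l j (\<rho> j) (\<gamma> j))))"
    by (simp add: sum_distrib_right prod.distrib mult.assoc)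
  also have "\<dots> = (\<Sum>\<beta>\<in>B. a \<beta> * (\<Sum>\<rho>\<in>G. \<Prod>j\<in>UNIV. complex_of_real (nd j (\<rho> j) ^ \<beta> j * l j (\<rho> j) (\<gamma> j))))"
    by (subst sum.swap) (simp add: sum_distrib_left)
  also have "\<dots> = (\<Sum>\<beta>\<in>B. a \<beta> * (\<Prod>j\<in>UNIV. \<Sum>r\<in>{1..k+1}. complex_of_real (nd j r ^ \<beta> j * l j r (\<gamma> j))))"
    unfolding G_def by (subst prod_sum_PiE) auto
  also have "\<dots> = (\<Sum>\<beta>\<in>B. a \<beta> * (\<Prod>j\<in>UNIV. (if \<gamma> j = \<beta> j then 1 else 0)))"
  proof (rule sum.cong[OF refl])
    fix \<beta> assume "\<beta> \<in> B"
    have "(\<Sum>r\<in>{1..k+1}. complex_of_real (nd j r ^ \<beta> j * l j r (\<gamma> j))) = (if \<gamma> j = \<beta> j then 1 else 0)" for j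
    proof -
      have "(\<Sum>r\<in>{1..k+1}. complex_of_real (nd j r ^ \<beta> j * l j r (\<gamma> j)))
           = complex_of_real (\<Sum>r=1..k+1. nd j r ^ \<beta> j * l j r (\<gamma> j))" by simp
      also have "\<dots> = (if \<gamma> j = \<beta> j then 1 else 0)"
        using dual[OF Bk[OF g] Bk[OF \<open>\<beta> \<in> B\<close>], of j] by simp
      finally show ?thesis .
    qed
    then show "a \<beta> * (\<Prod>j\<in>UNIV. \<Sum>r\<in>{1..k+1}. complex_of_real (nd j r ^ \<beta> j * l j r (\<gamma> j)))
        = a \<beta> * (\<Prod>j\<in>UNIV. (if \<gamma> j = \<beta> j then 1 else 0))" by simp
  qed
  also have "\<dots> = (\<Sum>\<beta>\<in>B. if \<beta> = \<gamma> then a \<beta> else 0)"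
  proof (rule sum.cong[OF refl])
    fix \<beta> show "a \<beta> * (\<Prod>j\<in>UNIV. (if \<gamma> j = \<beta> j then 1 else 0)) = (if \<beta> = \<gamma> then a \<beta> else 0)"
    proof (cases "\<beta> = \<gamma>")
      case False
      then obtain j where "\<gamma> j \<noteq> \<beta> j" by (metis ext)
      then have "(\<Prod>j\<in>UNIV. (if \<gamma> j = \<beta> j then 1 else 0)) = (0::complex)"
        by (intro prod_zero) auto
      then show ?thesis using False by simp
    qed simp
  qed
  also have "\<dots> = a \<gamma>" using finB g by (simp add: sum.delta')
  finally show ?thesis unfolding G_def .
qed

definition smono :: "('n::finite \<Rightarrow> nat) \<Rightarrow> real^'n \<Rightarrow> complex" where
  "smono \<beta> z = (\<Prod>i\<in>UNIV. complex_of_real (z$i) ^ \<beta> i)"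

lemma spolys_iff: "p \<in> spolys s k \<longleftrightarrow> (\<exists>c. p = (\<lambda>z. \<Sum>\<beta>\<in>{\<beta>. sdeg s \<beta> \<le> k}. c \<beta> * smono \<beta> z))"
  unfolding spolys_def smono_def by simp

lemma sdeg_ge: assumes "\<forall>i. 1 \<le> s i" shows "\<beta> i \<le> sdeg s \<beta>"
proof -
  have "\<beta> i \<le> s i * \<beta> i" using assms by simp
  also have "\<dots> \<le> sdeg s \<beta>" unfolding sdeg_def by (rule member_le_sum) auto
  finally show ?thesis .
qed

lemma finite_B: assumes "\<forall>i. 1 \<le> s i" shows "finite {\<beta>::'n::finite\<Rightarrow>nat. sdeg s \<beta> \<le> k}"
proof (rule finite_subset)
  show "{\<beta>::'n\<Rightarrow>nat. sdeg s \<beta> \<le> k} \<subseteq> PiE UNIV (\<lambda>_. {..k})"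
    using sdeg_ge[OF assms] by (auto simp: PiE_def Pi_def intro: order.trans)
  show "finite (PiE (UNIV::'n set) (\<lambda>_. {..k}))" by (intro finite_PiE) auto
qed

lemma spolys_add: assumes "p \<in> spolys s k" "q \<in> spolys s k" shows "(\<lambda>z. p z + q z) \<in> spolys s k"
proof -
  obtain c d where "p = (\<lambda>z. \<Sum>\<beta>\<in>{\<beta>. sdeg s \<beta> \<le> k}. c \<beta> * smono \<beta> z)"
     "q = (\<lambda>z. \<Sum>\<beta>\<in>{\<beta>. sdeg s \<beta> \<le> k}. d \<beta> * smono \<beta> z)" using assms unfolding spolys_iff by blast
  then show ?thesis unfolding spolys_iff
    by (intro exI[of _ "\<lambda>\<beta>. c \<beta> + d \<beta>"]) (simp add: sum.distrib distrib_right)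
qed

lemma spolys_cmult: assumes "p \<in> spolys s k" shows "(\<lambda>z. a * p z) \<in> spolys s k"
proof -
  obtain c where "p = (\<lambda>z. \<Sum>\<beta>\<in>{\<beta>. sdeg s \<beta> \<le> k}. c \<beta> * smono \<beta> z)"
     using assms unfolding spolys_iff by blast
  then show ?thesis unfolding spolys_iff
    by (intro exI[of _ "\<lambda>\<beta>. a * c \<beta>"]) (simp add: sum_distrib_left mult.assoc)
qed

lemma spolys_zero: "(\<lambda>z. 0) \<in> spolys s k"
  unfolding spolys_iff by (intro exI[of _ "\<lambda>\<beta>. 0"]) simp

lemma spolys_sum: assumes "finite A" "\<And>a. a \<in> A \<Longrightarrow> f a \<in> spolys s k"
  shows "(\<lambda>z. \<Sum>a\<in>A. f a z) \<in> spolys s k"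
  using assms
proof (induction A rule: finite_induct)
  case empty then show ?case by (simp add: spolys_zero)
next
  case (insert x F)
  then show ?case by (simp add: spolys_add)
qed

lemma spolys_mono: assumes "\<forall>i. 1 \<le> s i" "sdeg s \<beta> \<le> k" shows "smono \<beta> \<in> spolys s k"
  unfolding spolys_iff
proof (intro exI[of _ "\<lambda>\<gamma>. if \<gamma> = \<beta> then 1 else 0"] ext)
  fix z
  have "(\<Sum>\<gamma>\<in>{\<beta>. sdeg s \<beta> \<le> k}. (if \<gamma> = \<beta> then 1 else 0) * smono \<gamma> z)
      = (\<Sum>\<gamma>\<in>{\<beta>. sdeg s \<beta> \<le> k}. if \<gamma> = \<beta> then smono \<beta> z else 0)"
    by (rule sum.cong) auto
  also have "\<dots> = smono \<beta> z" using assms finite_B[OF assms(1), of k] by (simp add: sum.delta')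
  finally show "smono \<beta> z = (\<Sum>\<gamma>\<in>{\<beta>. sdeg s \<beta> \<le> k}. (if \<gamma> = \<beta> then 1 else 0) * smono \<gamma> z)" by simp
qed

lemma mono_translate:
  "smono \<beta> (z + v) = (\<Sum>\<gamma>\<in>PiE UNIV (\<lambda>i. {..\<beta> i}).
      (\<Prod>i\<in>UNIV. of_nat (\<beta> i choose \<gamma> i) * complex_of_real (v$i) ^ (\<beta> i - \<gamma> i)) * smono \<gamma> z)"
proof -
  have "smono \<beta> (z + v) = (\<Prod>i\<in>UNIV. \<Sum>g\<in>{..\<beta> i}. (of_nat (\<beta> i choose g) * complex_of_real (v$i) ^ (\<beta> i - g)) * complex_of_real (z$i) ^ g)"
    unfolding smono_def by (simp add: binomial_ring mult_ac)
  also have "\<dots> = (\<Sum>\<gamma>\<in>PiE UNIV (\<lambda>i. {..\<beta> i}). \<Prod>i\<in>UNIV. (of_nat (\<beta> i choose \<gamma> i) * complex_of_real (v$i) ^ (\<beta> i - \<gamma> i)) * complex_of_real (z$i) ^ \<gamma> i)"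
    by (rule prod_sum_PiE) auto
  also have "\<dots> = (\<Sum>\<gamma>\<in>PiE UNIV (\<lambda>i. {..\<beta> i}).
      (\<Prod>i\<in>UNIV. of_nat (\<beta> i choose \<gamma> i) * complex_of_real (v$i) ^ (\<beta> i - \<gamma> i)) * smono \<gamma> z)"
    unfolding smono_def by (simp add: prod.distrib)
  finally show ?thesis .
qed

lemma spolys_translate_mono: assumes "\<forall>i. 1 \<le> s i" "sdeg s \<beta> \<le> k"
  shows "(\<lambda>z. smono \<beta> (z + v)) \<in> spolys s k"
  unfolding mono_translate
proof (rule spolys_sum)
  show "finite (PiE (UNIV::'a set) (\<lambda>i. {..\<beta> i}))" by (intro finite_PiE) auto
  fix \<gamma> assume g: "\<gamma> \<in> PiE (UNIV::'a set) (\<lambda>i. {..\<beta> i})"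
  have "sdeg s \<gamma> \<le> sdeg s \<beta>" unfolding sdeg_def
    by (rule sum_mono) (use g in \<open>auto simp: PiE_def Pi_def\<close>)
  then show "(\<lambda>z. (\<Prod>i\<in>UNIV. of_nat (\<beta> i choose \<gamma> i) * complex_of_real (v$i) ^ (\<beta> i - \<gamma> i)) * smono \<gamma> z) \<in> spolys s k"
    using assms by (intro spolys_cmult spolys_mono) auto
qed

lemma spolys_translate: assumes "\<forall>i. 1 \<le> s i" "p \<in> spolys s k"
  shows "(\<lambda>z. p (z + v)) \<in> spolys s k"
proof -
  obtain c where "p = (\<lambda>z. \<Sum>\<beta>\<in>{\<beta>. sdeg s \<beta> \<le> k}. c \<beta> * smono \<beta> z)"
     using assms unfolding spolys_iff by blast
  then show ?thesis
    using assms(1) finite_B[OF assms(1), of k]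
    by (auto intro!: spolys_sum spolys_cmult spolys_translate_mono)
qed

lemma pow_powr_inv: assumes "0 \<le> w" "1 \<le> n" shows "(w ^ n) powr (1/real n) = w"
proof (cases "w = 0")
  case True then show ?thesis using assms by simp
next
  case False
  then have "w > 0" using assms by simp
  then have "(w ^ n) powr (1/real n) = (w powr real n) powr (1/real n)" by (simp add: powr_realpow)
  also have "\<dots> = w" using assms \<open>w > 0\<close> by (simp add: powr_powr)
  finally show ?thesis .
qed

lemma powr_inv_pow: assumes "0 \<le> w" "1 \<le> n" shows "(w powr (1/real n)) ^ n = w"
proof (cases "w = 0")
  case True then show ?thesis using assms by simp
next
  case False
  then have "w > 0" using assms by simp
  then have "(w powr (1/real n)) ^ n = (w powr (1/real n)) powr real n" by (simp add: powr_realpow)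
  also have "\<dots> = w" using assms \<open>w > 0\<close> by (simp add: powr_powr)
  finally show ?thesis .
qed

lemma pow_superadd: fixes u v :: real assumes "0 \<le> u" "0 \<le> v" "1 \<le> n" shows "u^n + v^n \<le> (u+v)^n"
  using assms(3)
proof (induction n rule: dec_induct)
  case base then show ?case by simp
next
  case (step n)
  have "u ^ Suc n + v ^ Suc n \<le> (u+v) * (u^n + v^n)"
    using assms by (simp add: algebra_simps)
  also have "\<dots> \<le> (u+v) * (u+v)^n" using step.IH assms by (intro mult_left_mono) auto
  finally show ?case by simp
qed

lemma root_subadd: fixes a b :: real assumes "1 \<le> n"
  shows "\<bar>a + b\<bar> powr (1/real n) \<le> \<bar>a\<bar> powr (1/real n) + \<bar>b\<bar> powr (1/real n)"
proof -
  define u where "u = \<bar>a\<bar> powr (1/real n)"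
  define v where "v = \<bar>b\<bar> powr (1/real n)"
  have "\<bar>a + b\<bar> \<le> u^n + v^n" unfolding u_def v_def using assms by (simp add: powr_inv_pow abs_triangle_ineq)
  also have "\<dots> \<le> (u+v)^n" using assms by (intro pow_superadd) (auto simp: u_def v_def)
  finally have "\<bar>a + b\<bar> powr (1/real n) \<le> ((u+v)^n) powr (1/real n)" by (intro powr_mono2) auto
  also have "\<dots> = u + v" using assms by (intro pow_powr_inv) (auto simp: u_def v_def)
  finally show ?thesis unfolding u_def v_def .
qed

lemma sdist_sym: "sdist s x y = sdist s y x"
  unfolding sdist_def by (simp add: abs_minus_commute)

lemma sdist_nonneg: "0 \<le> sdist s x y"
  unfolding sdist_def by (intro sum_nonneg) auto

lemma sdist_self: "sdist s x x = 0"
  unfolding sdist_def by simp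

lemma sdist_triangle: assumes "\<forall>i. 1 \<le> s i" shows "sdist s x z \<le> sdist s x y + sdist s y z"
  unfolding sdist_def sum.distrib[symmetric]
proof (rule sum_mono)
  fix i
  have "\<bar>x$i - z$i\<bar> = \<bar>(x$i - y$i) + (y$i - z$i)\<bar>" by simp
  then show "\<bar>x$i - z$i\<bar> powr (1/real (s i)) \<le> \<bar>x$i - y$i\<bar> powr (1/real (s i)) + \<bar>y$i - z$i\<bar> powr (1/real (s i))"
    using root_subadd[of "s i" "x$i - y$i" "y$i - z$i"] assms by simp
qed

lemma comp_le: assumes "\<forall>i. 1 \<le> s i" shows "\<bar>x$i - y$i\<bar> \<le> sdist s x y ^ s i"
proof -
  have "\<bar>x$i - y$i\<bar> powr (1/real (s i)) \<le> sdist s x y"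
    unfolding sdist_def by (rule member_le_sum) auto
  then have "(\<bar>x$i - y$i\<bar> powr (1/real (s i))) ^ s i \<le> sdist s x y ^ s i"
    by (intro power_mono) auto
  then show ?thesis using assms powr_inv_pow[of "\<bar>x$i - y$i\<bar>" "s i"] by simp
qed

lemma sdist_grid: assumes "\<forall>i. 1 \<le> s i" "0 \<le> lam"
  shows "sdist s y (y + (\<chi> j. (real (\<rho> j) * lam) ^ s j)) = (\<Sum>j\<in>UNIV. real (\<rho> j)) * lam"
  unfolding sdist_def sum_distrib_right
proof (rule sum.cong[OF refl])
  fix j
  show "\<bar>y$j - (y + (\<chi> j. (real (\<rho> j) * lam) ^ s j))$j\<bar> powr (1/real (s j)) = real (\<rho> j) * lam"
    using assms pow_powr_inv[of "real (\<rho> j) * lam" "s j"] by simp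
qed

lemma mono_bound: assumes "\<forall>i. 1 \<le> s i" "0 \<le> \<delta>" "\<forall>i. \<bar>w$i\<bar> \<le> \<delta> ^ s i"
  shows "cmod (smono \<beta> w) \<le> \<delta> ^ sdeg s \<beta>"
proof -
  have "cmod (smono \<beta> w) = (\<Prod>i\<in>UNIV. \<bar>w$i\<bar> ^ \<beta> i)"
    unfolding smono_def prod_norm[symmetric] by (simp add: norm_power)
  also have "\<dots> \<le> (\<Prod>i\<in>UNIV. (\<delta> ^ s i) ^ \<beta> i)"
    by (intro prod_mono conjI power_mono) (use assms in auto)
  also have "\<dots> = \<delta> ^ sdeg s \<beta>"
    unfolding sdeg_def by (simp add: power_sum power_mult)
  finally show ?thesis .
qed

lemma mono_scale:
  "smono \<beta> (\<chi> j. (real (\<rho> j) * lam) ^ s j) = complex_of_real (lam ^ sdeg s \<beta>) * smono \<beta> (\<chi> j. real (\<rho> j) ^ s j)"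
  unfolding smono_def sdeg_def
  by (simp add: power_sum power_mult_distrib prod.distrib power_mult[symmetric] mult.commute)

lemma sdist_eq0: assumes "sdist s x y = 0" shows "x = y"
proof -
  have "\<forall>i\<in>UNIV. \<bar>x$i - y$i\<bar> powr (1 / real (s i)) = 0"
    using assms unfolding sdist_def by (subst sum_nonneg_eq_0_iff[symmetric]) auto
  then show ?thesis by (simp add: vec_eq_iff)
qed

lemma coeff_bound:
  fixes l :: "'n::finite \<Rightarrow> nat \<Rightarrow> nat \<Rightarrow> real" and a :: "('n \<Rightarrow> nat) \<Rightarrow> complex"
  assumes dual: "\<And>j b c. b \<le> k \<Longrightarrow> c \<le> k \<Longrightarrow> (\<Sum>r=1..k+1. (real r ^ s j) ^ c * l j r b) = (if b = c then 1 else 0)"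
    and finB: "finite B" and Bk: "\<And>\<beta> i. \<beta> \<in> B \<Longrightarrow> \<beta> i \<le> k" and g: "\<gamma> \<in> B"
    and bnd: "\<And>\<rho>. \<rho> \<in> PiE UNIV (\<lambda>_. {1..k+1}) \<Longrightarrow> cmod (\<Sum>\<beta>\<in>B. a \<beta> * smono \<beta> (\<chi> j. real (\<rho> j) ^ s j)) \<le> K"
  shows "cmod (a \<gamma>) \<le> K * (\<Sum>\<rho>\<in>PiE UNIV (\<lambda>_. {1..k+1}). \<Prod>j\<in>UNIV. \<bar>l j (\<rho> j) (\<gamma> j)\<bar>)"
proof -
  define G where "G = PiE (UNIV::'n set) (\<lambda>_. {1..k+1})"
  have finG: "finite G" unfolding G_def by (intro finite_PiE) auto
  have "a \<gamma> = (\<Sum>\<rho>\<in>G. (\<Sum>\<beta>\<in>B. a \<beta> * (\<Prod>j\<in>UNIV. complex_of_real (real (\<rho> j) ^ s j) ^ \<beta> j))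
            * (\<Prod>j\<in>UNIV. complex_of_real (l j (\<rho> j) (\<gamma> j))))"
    unfolding G_def
  proof (rule sym, rule tensor_interp[where nd="\<lambda>j r. real r ^ s j" and k=k and l=l and B=B and \<gamma>=\<gamma> and a=a])
    fix j b c assume "b \<le> k" "c \<le> k"
    then show "(\<Sum>r=1..k+1. (real r ^ s j) ^ c * l j r b) = (if b = c then 1 else 0)" by (rule dual)
  next
    fix \<beta> i assume "\<beta> \<in> B" then show "\<beta> i \<le> k" by (rule Bk)
  qed (fact finB, fact g)
  also have "\<dots> = (\<Sum>\<rho>\<in>G. (\<Sum>\<beta>\<in>B. a \<beta> * smono \<beta> (\<chi> j. real (\<rho> j) ^ s j))
            * (\<Prod>j\<in>UNIV. complex_of_real (l j (\<rho> j) (\<gamma> j))))"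
    unfolding smono_def by simp
  finally have eq: "a \<gamma> = (\<Sum>\<rho>\<in>G. (\<Sum>\<beta>\<in>B. a \<beta> * smono \<beta> (\<chi> j. real (\<rho> j) ^ s j))
            * (\<Prod>j\<in>UNIV. complex_of_real (l j (\<rho> j) (\<gamma> j))))" .
  have "cmod (a \<gamma>) \<le> (\<Sum>\<rho>\<in>G. cmod ((\<Sum>\<beta>\<in>B. a \<beta> * smono \<beta> (\<chi> j. real (\<rho> j) ^ s j))
            * (\<Prod>j\<in>UNIV. complex_of_real (l j (\<rho> j) (\<gamma> j)))))"
    unfolding eq by (rule norm_sum)
  also have "\<dots> \<le> (\<Sum>\<rho>\<in>G. K * (\<Prod>j\<in>UNIV. \<bar>l j (\<rho> j) (\<gamma> j)\<bar>))"
  proof (rule sum_mono)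
    fix \<rho> assume r: "\<rho> \<in> G"
    have e: "cmod ((\<Sum>\<beta>\<in>B. a \<beta> * smono \<beta> (\<chi> j. real (\<rho> j) ^ s j))
            * (\<Prod>j\<in>UNIV. complex_of_real (l j (\<rho> j) (\<gamma> j))))
        = cmod (\<Sum>\<beta>\<in>B. a \<beta> * smono \<beta> (\<chi> j. real (\<rho> j) ^ s j)) * (\<Prod>j\<in>UNIV. \<bar>l j (\<rho> j) (\<gamma> j)\<bar>)"
      unfolding norm_mult prod_norm[symmetric] norm_of_real ..
    have "cmod (\<Sum>\<beta>\<in>B. a \<beta> * smono \<beta> (\<chi> j. real (\<rho> j) ^ s j)) * (\<Prod>j\<in>UNIV. \<bar>l j (\<rho> j) (\<gamma> j)\<bar>)
       \<le> K * (\<Prod>j\<in>UNIV. \<bar>l j (\<rho> j) (\<gamma> j)\<bar>)"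
      by (rule mult_right_mono[OF bnd]) (use r in \<open>simp_all add: G_def prod_nonneg\<close>)
    then show "cmod ((\<Sum>\<beta>\<in>B. a \<beta> * smono \<beta> (\<chi> j. real (\<rho> j) ^ s j))
            * (\<Prod>j\<in>UNIV. complex_of_real (l j (\<rho> j) (\<gamma> j)))) \<le> K * (\<Prod>j\<in>UNIV. \<bar>l j (\<rho> j) (\<gamma> j)\<bar>)"
      unfolding e .
  qed
  also have "\<dots> = K * (\<Sum>\<rho>\<in>G. \<Prod>j\<in>UNIV. \<bar>l j (\<rho> j) (\<gamma> j)\<bar>)" by (rule sum_distrib_left[symmetric])
  finally show ?thesis unfolding G_def .
qed

lemma powr_split: "(d::real) powr \<eta> = d powr \<alpha> * d powr (\<eta> - \<alpha>)"
  by (simp add: powr_add[symmetric])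

lemma pow_mix:
  fixes lam \<delta> T \<alpha> \<eta> :: real and b :: nat
  assumes "0 < lam" "lam \<le> T" "0 \<le> \<delta>" "\<delta> \<le> T" "\<alpha> < b" "b \<le> \<eta>" "0 < \<alpha>"
  shows "lam powr (\<eta> - b) * \<delta> ^ b \<le> T powr (\<eta> - \<alpha>) * \<delta> powr \<alpha>"
proof (cases "\<delta> = 0")
  case True
  have "b \<ge> 1" using assms by linarith
  then show ?thesis using True by (simp add: power_0_left)
next
  case False
  then have dp: "\<delta> > 0" using assms by simp
  have "\<delta> ^ b = \<delta> powr b" using dp by (simp add: powr_realpow)
  also have "\<dots> = \<delta> powr \<alpha> * \<delta> powr (b - \<alpha>)" by (rule powr_split)
  finally have e1: "\<delta> ^ b = \<delta> powr \<alpha> * \<delta> powr (b - \<alpha>)" .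
  have "lam powr (\<eta> - b) \<le> T powr (\<eta> - b)" using assms by (intro powr_mono2) auto
  moreover have "\<delta> powr (b - \<alpha>) \<le> T powr (b - \<alpha>)" using assms by (intro powr_mono2) auto
  ultimately have "lam powr (\<eta> - b) * \<delta> powr (b - \<alpha>) \<le> T powr (\<eta> - b) * T powr (b - \<alpha>)"
    by (intro mult_mono) auto
  also have "\<dots> = T powr (\<eta> - \<alpha>)" by (simp add: powr_add[symmetric])
  finally have "lam powr (\<eta> - b) * \<delta> powr (b - \<alpha>) \<le> T powr (\<eta> - \<alpha>)" .
  then have "(lam powr (\<eta> - b) * \<delta> powr (b - \<alpha>)) * \<delta> powr \<alpha> \<le> T powr (\<eta> - \<alpha>) * \<delta> powr \<alpha>"
    by (intro mult_right_mono) auto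
  then show ?thesis unfolding e1 by (simp add: mult_ac)
qed

definition Bset :: "('n::finite \<Rightarrow> nat) \<Rightarrow> nat \<Rightarrow> ('n \<Rightarrow> nat) set" where
  "Bset s k = {\<beta>. sdeg s \<beta> \<le> k}"
definition Grid :: "nat \<Rightarrow> ('n::finite \<Rightarrow> nat) set" where
  "Grid k = PiE UNIV (\<lambda>_. {1..k+1})"
definition CLc :: "('n::finite \<Rightarrow> nat) \<Rightarrow> nat \<Rightarrow> ('n \<Rightarrow> nat \<Rightarrow> nat \<Rightarrow> real) \<Rightarrow> real" where
  "CLc s k l = (\<Sum>\<gamma>\<in>Bset s k. \<Sum>\<rho>\<in>Grid k. \<Prod>j\<in>UNIV. \<bar>l j (\<rho> j) (\<gamma> j)\<bar>)"
definition C0c :: "('n::finite \<Rightarrow> nat) \<Rightarrow> real \<Rightarrow> real \<Rightarrow> nat \<Rightarrow> ('n \<Rightarrow> nat \<Rightarrow> nat \<Rightarrow> real) \<Rightarrow> real" where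
  "C0c s \<eta> \<alpha> k l = 3 powr (\<eta> - \<alpha>) * (1 + 2 * real (card (Bset s k)) * (1 + real (CARD('n) * (k+1))) powr \<eta> * CLc s k l)"

lemma pointwise:
  fixes s :: "'n::finite \<Rightarrow> nat" and l :: "'n \<Rightarrow> nat \<Rightarrow> nat \<Rightarrow> real"
    and U :: "real^'n \<Rightarrow> real^'n \<Rightarrow> complex" and P :: "real^'n \<Rightarrow> complex"
  assumes s1: "\<forall>i. 1 \<le> s i" and a0: "0 < \<alpha>" and ae: "\<alpha> < \<eta>"
    and dual: "\<And>j b c. b \<le> k \<Longrightarrow> c \<le> k \<Longrightarrow> (\<Sum>r=1..k+1. (real r ^ s j) ^ c * l j r b) = (if b = c then 1 else 0)"
    and kdef: "k = nat \<lfloor>\<eta>\<rfloor>"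
    and adm: "admissible_domain s D"
    and xD: "x \<in> D" and yD: "y \<in> D" and R: "0 < R" and dxy: "sdist s x y < R"
    and Np: "0 < N'" and hN: "\<forall>x\<in>D. \<forall>y\<in>D. cmod (U x y) \<le> N' * sdist s x y powr \<eta>"
    and Sp: "0 < S'" and P: "P \<in> spolys s k"
    and hS: "\<forall>z\<in>D. cmod (U x z - U y z - P z) \<le> S' * sdist s y z powr \<alpha> * (sdist s x y + sdist s y z) powr (\<eta> - \<alpha>)"
  defines "C0 \<equiv> C0c s \<eta> \<alpha> k l"
  shows "\<exists>Q\<in>spolys s (nat \<lfloor>\<alpha>\<rfloor>). \<forall>z\<in>D. sdist s x z < R \<longrightarrow>
            cmod (U x z - Q z) \<le> C0 * (N' + S') * R powr (\<eta> - \<alpha>) * sdist s z y powr \<alpha>"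
proof -
  define B where "B = Bset s k"
  define G where "G = (Grid k :: ('n \<Rightarrow> nat) set)"
  define CL where "CL = CLc s k l"
  have C0_def: "C0 = 3 powr (\<eta> - \<alpha>) * (1 + 2 * real (card B) * (1 + real (CARD('n) * (k+1))) powr \<eta> * CL)"
    unfolding C0_def C0c_def B_def CL_def ..
  define e where "e = \<eta> - \<alpha>"
  have e0: "0 < e" using ae by (simp add: e_def)
  have finB: "finite B" unfolding B_def Bset_def by (rule finite_B[OF s1])
  have finG: "finite G" unfolding G_def Grid_def by (intro finite_PiE) auto
  have CL0: "0 \<le> CL" unfolding CL_def CLc_def by (intro sum_nonneg prod_nonneg) auto
  have t3: "1 \<le> 3 powr e" using e0 by (simp add: ge_one_powr_ge_zero)
  have t23: "2 powr e \<le> 3 powr e" using e0 by (intro powr_mono2) auto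
  have C0ge: "3 powr e \<le> C0"
  proof -
    define X where "X = 2 * real (card B) * (1 + real (CARD('n) * (k+1))) powr \<eta> * CL"
    have "0 \<le> X" using CL0 unfolding X_def by simp
    then have "3 powr e * 1 \<le> 3 powr e * (1 + X)" by (intro mult_left_mono) auto
    then show ?thesis unfolding C0_def e_def[symmetric] X_def[symmetric] by simp
  qed
  show ?thesis
  proof (cases "x = y")
    case True
    show ?thesis
    proof (rule bexI[of _ "\<lambda>z. 0"], intro ballI impI)
      fix z assume zD: "z \<in> D" and dz: "sdist s x z < R"
      have "cmod (U x z - 0) \<le> N' * sdist s x z powr \<eta>" using hN xD zD by simp
      also have "\<dots> = N' * (sdist s x z powr e * sdist s x z powr \<alpha>)"
        unfolding e_def by (simp add: powr_split[of _ \<eta> \<alpha>] mult_ac)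
      also have "\<dots> \<le> N' * (R powr e * sdist s x z powr \<alpha>)"
        using dz e0 Np by (intro mult_left_mono mult_right_mono powr_mono2) (auto simp: sdist_nonneg)
      also have "\<dots> \<le> (C0 * (N' + S')) * (R powr e * sdist s x z powr \<alpha>)"
      proof (rule mult_right_mono)
        show "N' \<le> C0 * (N' + S')" using C0ge t3 Np Sp
          by (smt (verit, best) mult_le_cancel_right1)
      qed simp
      finally show "cmod (U x z - 0) \<le> C0 * (N' + S') * R powr (\<eta> - \<alpha>) * sdist s z y powr \<alpha>"
        using True by (simp add: e_def sdist_sym mult_ac)
    qed (rule spolys_zero)
  next
    case False
    define lam where "lam = sdist s x y"
    have lam0: "0 < lam" using False sdist_eq0[of s x y] sdist_nonneg[of s x y] unfolding lam_def by force
    define ka where "ka = nat \<lfloor>\<alpha>\<rfloor>"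
    define Bl where "Bl = Bset s ka"
    have kak: "ka \<le> k" unfolding ka_def kdef using ae by (intro nat_mono floor_mono) simp
    have BlB: "Bl \<subseteq> B" unfolding Bl_def B_def Bset_def using kak by auto
    obtain c where Pc: "(\<lambda>w. P (w + y)) = (\<lambda>w. \<Sum>\<beta>\<in>B. c \<beta> * smono \<beta> w)"
      using spolys_translate[OF s1 P, of y] unfolding spolys_iff B_def Bset_def by blast
    have Pz: "P z = (\<Sum>\<beta>\<in>B. c \<beta> * smono \<beta> (z - y))" for z
      using fun_cong[OF Pc, of "z - y"] by simp
    define Q where "Q = (\<lambda>z. \<Sum>\<beta>\<in>Bl. c \<beta> * smono \<beta> (z + (- y)))"
    have Qs: "Q \<in> spolys s ka"
    proof -
      have "(\<lambda>w. \<Sum>\<beta>\<in>Bl. c \<beta> * smono \<beta> w) \<in> spolys s ka" unfolding spolys_iff Bl_def Bset_def by blast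
      from spolys_translate[OF s1 this, of "-y"] show ?thesis unfolding Q_def .
    qed
    define n where "n = CARD('n)"
    define T where "T = (1 + real (n*(k+1))) * lam"
    define K where "K = 2 * (N' + S') * T powr \<eta>"
    have K0: "0 \<le> K" unfolding K_def using Np Sp by simp
    have grid_bound: "cmod (P (y + (\<chi> j. (real (\<rho> j) * lam) ^ s j))) \<le> K" if "\<rho> \<in> G" for \<rho>
    proof -
      define z where "z = y + (\<chi> j. (real (\<rho> j) * lam) ^ s j)"
      have r1: "\<forall>j. 1 \<le> \<rho> j" and rk: "\<forall>j. \<rho> j \<le> k+1" using that unfolding G_def Grid_def PiE_def Pi_def by auto
      have zD: "z \<in> D" using adm xD yD False r1 unfolding admissible_domain_def z_def lam_def by blast
      have dyz: "sdist s y z = (\<Sum>j\<in>UNIV. real (\<rho> j)) * lam"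
        unfolding z_def using sdist_grid[OF s1, of lam y \<rho>] lam0 by simp
      have "(\<Sum>j\<in>UNIV. real (\<rho> j)) \<le> (\<Sum>j\<in>(UNIV::'n set). real (k+1))"
      proof (rule sum_mono)
        fix j have "\<rho> j \<le> k+1" using rk by blast
        then show "real (\<rho> j) \<le> real (k+1)" by linarith
      qed
      also have "\<dots> = real (n*(k+1))" unfolding n_def by (simp add: algebra_simps)
      finally have "sdist s y z \<le> real (n*(k+1)) * lam" unfolding dyz using lam0 by (intro mult_right_mono) auto
      then have dyzT: "lam + sdist s y z \<le> T" unfolding T_def by (simp add: algebra_simps)
      have dyz0: "0 \<le> sdist s y z" by (rule sdist_nonneg)
      have dxzT: "sdist s x z \<le> T" using sdist_triangle[OF s1, of x z y] dyzT unfolding lam_def by linarith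
      have T0: "0 \<le> T" using dyzT dyz0 lam0 by linarith
      have b1: "cmod (U x z) \<le> N' * T powr \<eta>"
      proof -
        have "cmod (U x z) \<le> N' * sdist s x z powr \<eta>" using hN xD zD by blast
        also have "\<dots> \<le> N' * T powr \<eta>" using Np dxzT ae a0
          by (intro mult_left_mono powr_mono2) (auto simp: sdist_nonneg)
        finally show ?thesis .
      qed
      have b2: "cmod (U y z) \<le> N' * T powr \<eta>"
      proof -
        have "cmod (U y z) \<le> N' * sdist s y z powr \<eta>" using hN yD zD by blast
        also have "\<dots> \<le> N' * T powr \<eta>" using Np dyzT ae a0 lam0
          by (intro mult_left_mono powr_mono2) (auto simp: sdist_nonneg)
        finally show ?thesis .
      qed
      have b3: "cmod (U x z - U y z - P z) \<le> S' * T powr \<eta>"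
      proof -
        have "cmod (U x z - U y z - P z) \<le> S' * sdist s y z powr \<alpha> * (lam + sdist s y z) powr (\<eta> - \<alpha>)"
          using hS zD unfolding lam_def by blast
        also have "\<dots> \<le> S' * T powr \<alpha> * T powr (\<eta> - \<alpha>)"
          using Sp dyzT ae a0 lam0 dyz0
          by (intro mult_left_mono mult_mono powr_mono2) (auto simp: sdist_nonneg)
        also have "\<dots> = S' * T powr \<eta>" by (simp add: powr_add[symmetric] mult.assoc)
        finally show ?thesis .
      qed
      have "P z = U x z - U y z - (U x z - U y z - P z)" by simp
      then have "cmod (P z) \<le> cmod (U x z - U y z) + cmod (U x z - U y z - P z)"
        using norm_triangle_ineq4[of "U x z - U y z" "U x z - U y z - P z"] by simp
      moreover have "cmod (U x z - U y z) \<le> cmod (U x z) + cmod (U y z)" by (rule norm_triangle_ineq4)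
      ultimately have "cmod (P z) \<le> cmod (U x z) + cmod (U y z) + cmod (U x z - U y z - P z)" by linarith
      also have "\<dots> \<le> K"
      proof -
        have "0 \<le> S' * T powr \<eta>" using Sp by simp
        moreover have "K = N' * T powr \<eta> + N' * T powr \<eta> + S' * T powr \<eta> + S' * T powr \<eta>"
          unfolding K_def by (simp add: algebra_simps)
        ultimately show ?thesis using b1 b2 b3 by linarith
      qed
      finally show ?thesis unfolding z_def .
    qed
    have coef: "cmod (c \<gamma>) * lam ^ sdeg s \<gamma> \<le> K * CL" if "\<gamma> \<in> B" for \<gamma>
    proof -
      have "cmod (c \<gamma> * complex_of_real (lam ^ sdeg s \<gamma>)) \<le> K * (\<Sum>\<rho>\<in>PiE UNIV (\<lambda>_. {1..k+1}). \<Prod>j\<in>UNIV. \<bar>l j (\<rho> j) (\<gamma> j)\<bar>)"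
      proof (rule coeff_bound[where a="\<lambda>\<beta>. c \<beta> * complex_of_real (lam ^ sdeg s \<beta>)" and B=B and k=k and l=l])
        fix j b c' assume "b \<le> k" "c' \<le> k"
        then show "(\<Sum>r=1..k+1. (real r ^ s j) ^ c' * l j r b) = (if b = c' then 1 else 0)" by (rule dual)
      next
        show "finite B" by (rule finB)
      next
        fix \<beta> i assume "\<beta> \<in> B" then show "\<beta> i \<le> k"
          using sdeg_ge[OF s1, of \<beta> i] unfolding B_def Bset_def by simp
      next
        show "\<gamma> \<in> B" by (rule that)
      next
        fix \<rho> :: "'n \<Rightarrow> nat" assume r: "\<rho> \<in> PiE UNIV (\<lambda>_. {1..k+1})"
        have "(\<Sum>\<beta>\<in>B. c \<beta> * complex_of_real (lam ^ sdeg s \<beta>) * smono \<beta> (\<chi> j. real (\<rho> j) ^ s j))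
            = (\<Sum>\<beta>\<in>B. c \<beta> * smono \<beta> (\<chi> j. (real (\<rho> j) * lam) ^ s j))"
          by (simp add: mono_scale mult.assoc)
        also have "\<dots> = P (y + (\<chi> j. (real (\<rho> j) * lam) ^ s j))" by (simp add: Pz)
        finally show "cmod (\<Sum>\<beta>\<in>B. c \<beta> * complex_of_real (lam ^ sdeg s \<beta>) * smono \<beta> (\<chi> j. real (\<rho> j) ^ s j)) \<le> K"
          using grid_bound[of \<rho>] r unfolding G_def Grid_def by simp
      qed
      also have "\<dots> \<le> K * CL"
        unfolding CL_def CLc_def
      proof (rule mult_left_mono[OF _ K0])
        show "(\<Sum>\<rho>\<in>PiE UNIV (\<lambda>_. {1..k+1}). \<Prod>j\<in>UNIV. \<bar>l j (\<rho> j) (\<gamma> j)\<bar>)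
          \<le> (\<Sum>\<gamma>\<in>Bset s k. \<Sum>\<rho>\<in>Grid k. \<Prod>j\<in>UNIV. \<bar>l j (\<rho> j) (\<gamma> j)\<bar>)"
          using that finB unfolding Grid_def B_def
          by (intro member_le_sum[where f="\<lambda>\<gamma>. \<Sum>\<rho>\<in>PiE UNIV (\<lambda>_. {1..k+1}). \<Prod>j\<in>UNIV. \<bar>l j (\<rho> j) (\<gamma> j)\<bar>"])
             (auto intro!: sum_nonneg prod_nonneg)
      qed
      finally show ?thesis using lam0 by (simp add: norm_mult norm_power)
    qed
    show ?thesis
    proof (rule bexI[of _ Q])
      show "Q \<in> spolys s (nat \<lfloor>\<alpha>\<rfloor>)" using Qs unfolding ka_def .
      show "\<forall>z\<in>D. sdist s x z < R \<longrightarrow> cmod (U x z - Q z) \<le> C0 * (N' + S') * R powr (\<eta> - \<alpha>) * sdist s z y powr \<alpha>"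
      proof (intro ballI impI)
        fix z assume zD: "z \<in> D" and dz: "sdist s x z < R"
        define \<delta> where "\<delta> = sdist s y z"
        have d0: "0 \<le> \<delta>" unfolding \<delta>_def by (rule sdist_nonneg)
        have d2R: "\<delta> \<le> 2 * R" using sdist_triangle[OF s1, of y z x] dz dxy sdist_sym[of s y x]
          unfolding \<delta>_def by linarith
        have lam2R: "lam \<le> 2 * R" using dxy R unfolding lam_def by linarith
        have dzy: "sdist s z y = \<delta>" unfolding \<delta>_def by (rule sdist_sym)
        define A1 where "A1 = 2 * (N' + S') * (1 + real (n*(k+1))) powr \<eta> * CL"
        have A10: "0 \<le> A1" unfolding A1_def using Np Sp CL0 by simp
        define Y where "Y = (2*R) powr e * \<delta> powr \<alpha>"
        have Y0: "0 \<le> Y" unfolding Y_def by simp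
        have trm: "cmod (c \<beta> * smono \<beta> (z - y)) \<le> A1 * Y" if bB: "\<beta> \<in> B - Bl" for \<beta>
        proof -
          define b where "b = sdeg s \<beta>"
          have mb: "cmod (smono \<beta> (z - y)) \<le> \<delta> ^ b"
            unfolding b_def
          proof (rule mono_bound[OF s1 d0], rule allI)
            fix i show "\<bar>(z - y)$i\<bar> \<le> \<delta> ^ s i" using comp_le[OF s1, of z i y] dzy by simp
          qed
          have lb: "0 < lam ^ b" using lam0 by simp
          have cb: "cmod (c \<beta>) \<le> K * CL / lam ^ b"
            using coef[of \<beta>] bB lb unfolding b_def by (simp add: pos_le_divide_eq)
          have ab: "\<alpha> < real b"
          proof -
            have "\<not> b \<le> ka" using bB unfolding b_def Bl_def Bset_def by simp
            then have "ka + 1 \<le> b" by simp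
            moreover have "real ka = of_int \<lfloor>\<alpha>\<rfloor>" unfolding ka_def using a0 by simp
            moreover have "\<alpha> < of_int \<lfloor>\<alpha>\<rfloor> + 1" by linarith
            ultimately show ?thesis by linarith
          qed
          have be: "real b \<le> \<eta>"
          proof -
            have "b \<le> k" using bB unfolding b_def B_def Bset_def by simp
            moreover have "real k \<le> \<eta>" unfolding kdef using a0 ae by linarith
            ultimately show ?thesis by linarith
          qed
          have KCL: "K * CL / lam ^ b = A1 * lam powr (\<eta> - real b)"
          proof -
            have "T powr \<eta> = (1 + real (n*(k+1))) powr \<eta> * lam powr \<eta>"
              unfolding T_def using lam0 by (simp add: powr_mult)
            moreover have "lam powr \<eta> / lam ^ b = lam powr (\<eta> - real b)"
              using lam0 by (simp add: powr_diff powr_realpow)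
            ultimately show ?thesis unfolding K_def A1_def
              by (metis (no_types, lifting) mult.commute mult.left_commute times_divide_eq_right)
          qed
          have "cmod (c \<beta> * smono \<beta> (z - y)) \<le> (K * CL / lam ^ b) * \<delta> ^ b"
            unfolding norm_mult using cb mb order_trans[OF norm_ge_zero cb] by (intro mult_mono) auto
          also have "\<dots> = A1 * (lam powr (\<eta> - real b) * \<delta> ^ b)" unfolding KCL by simp
          also have "\<dots> \<le> A1 * ((2*R) powr (\<eta> - \<alpha>) * \<delta> powr \<alpha>)"
            using pow_mix[OF lam0 lam2R d0 d2R ab be a0] A10 by (intro mult_left_mono) auto
          finally show ?thesis unfolding Y_def e_def .
        qed
        have hi: "cmod (P z - Q z) \<le> real (card B) * (A1 * Y)"
        proof -
          have "Q z = (\<Sum>\<beta>\<in>Bl. c \<beta> * smono \<beta> (z - y))" unfolding Q_def by simp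
          moreover have "P z = (\<Sum>\<beta>\<in>B - Bl. c \<beta> * smono \<beta> (z - y)) + (\<Sum>\<beta>\<in>Bl. c \<beta> * smono \<beta> (z - y))"
            unfolding Pz using sum.subset_diff[OF BlB finB] by blast
          ultimately have "P z - Q z = (\<Sum>\<beta>\<in>B - Bl. c \<beta> * smono \<beta> (z - y))" by simp
          then have "cmod (P z - Q z) \<le> (\<Sum>\<beta>\<in>B - Bl. cmod (c \<beta> * smono \<beta> (z - y)))"
            by (simp add: norm_sum)
          also have "\<dots> \<le> (\<Sum>\<beta>\<in>B - Bl. A1 * Y)" by (rule sum_mono) (rule trm)
          also have "\<dots> = real (card (B - Bl)) * (A1 * Y)" by simp
          also have "\<dots> \<le> real (card B) * (A1 * Y)"
            using card_mono[OF finB, of "B - Bl"] A10 Y0 by (intro mult_right_mono) auto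
          finally show ?thesis .
        qed
        have hy: "cmod (U y z) \<le> N' * (2 powr e * R powr e * \<delta> powr \<alpha>)"
        proof -
          have "cmod (U y z) \<le> N' * \<delta> powr \<eta>" using hN yD zD unfolding \<delta>_def by blast
          also have "\<dots> = N' * (\<delta> powr e * \<delta> powr \<alpha>)" unfolding e_def by (simp add: powr_split[of _ \<eta> \<alpha>] mult_ac)
          also have "\<dots> \<le> N' * ((2*R) powr e * \<delta> powr \<alpha>)"
            using d0 d2R e0 Np by (intro mult_left_mono mult_right_mono powr_mono2) auto
          finally show ?thesis using R by (simp add: powr_mult)
        qed
        have herr: "cmod (U x z - U y z - P z) \<le> S' * (3 powr e * R powr e * \<delta> powr \<alpha>)"
        proof -
          have "cmod (U x z - U y z - P z) \<le> S' * \<delta> powr \<alpha> * (lam + \<delta>) powr e"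
            using hS zD unfolding \<delta>_def lam_def e_def by blast
          also have "\<dots> \<le> S' * \<delta> powr \<alpha> * (3*R) powr e"
            using d0 d2R e0 Sp lam0 dxy unfolding lam_def
            by (intro mult_left_mono powr_mono2) auto
          finally show ?thesis using R by (simp add: powr_mult mult_ac)
        qed
        have "U x z - Q z = U y z + (U x z - U y z - P z) + (P z - Q z)" by simp
        then have "cmod (U x z - Q z) \<le> cmod (U y z + (U x z - U y z - P z)) + cmod (P z - Q z)"
          using norm_triangle_ineq[of "U y z + (U x z - U y z - P z)" "P z - Q z"] by simp
        moreover have "cmod (U y z + (U x z - U y z - P z)) \<le> cmod (U y z) + cmod (U x z - U y z - P z)"
          by (rule norm_triangle_ineq)
        ultimately have "cmod (U x z - Q z) \<le> cmod (U y z) + cmod (U x z - U y z - P z) + cmod (P z - Q z)"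
          by linarith
        also have "\<dots> \<le> C0 * (N' + S') * R powr (\<eta> - \<alpha>) * \<delta> powr \<alpha>"
        proof -
          define W where "W = R powr e * \<delta> powr \<alpha>"
          have W0: "0 \<le> W" unfolding W_def by simp
          have YW: "Y = 2 powr e * W" unfolding Y_def W_def using R by (simp add: powr_mult)
          have C0e: "C0 * (N' + S') = 3 powr e * (N' + S') + 3 powr e * (real (card B) * A1)"
            unfolding C0_def A1_def e_def[symmetric] n_def by (simp add: algebra_simps)
          have i1: "N' * (2 powr e * W) \<le> N' * (3 powr e * W)"
            using t23 W0 Np by (intro mult_left_mono mult_right_mono) auto
          have i2: "real (card B) * (A1 * (2 powr e * W)) \<le> real (card B) * (A1 * (3 powr e * W))"
            using t23 W0 A10 by (intro mult_left_mono mult_right_mono) auto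
          have "cmod (U y z) + cmod (U x z - U y z - P z) + cmod (P z - Q z)
              \<le> N' * (2 powr e * W) + S' * (3 powr e * W) + real (card B) * (A1 * (2 powr e * W))"
            using hy herr hi unfolding YW W_def by (simp add: mult_ac)
          also have "\<dots> \<le> N' * (3 powr e * W) + S' * (3 powr e * W) + real (card B) * (A1 * (3 powr e * W))"
            using i1 i2 by linarith
          also have "\<dots> = (3 powr e * (N' + S') + 3 powr e * (real (card B) * A1)) * W"
            by (simp add: algebra_simps)
          also have "\<dots> = C0 * (N' + S') * R powr (\<eta> - \<alpha>) * \<delta> powr \<alpha>"
            unfolding C0e[symmetric] W_def e_def[symmetric] by (simp only: mult_ac)
          finally show ?thesis .
        qed
        finally show "cmod (U x z - Q z) \<le> C0 * (N' + S') * R powr (\<eta> - \<alpha>) * sdist s z y powr \<alpha>"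
          unfolding dzy .
      qed
    qed
  qed
qed

lemma exists_dual:
  fixes s :: "'n::finite \<Rightarrow> nat"
  assumes s1: "\<forall>i. 1 \<le> s i"
  shows "\<exists>l::'n \<Rightarrow> nat \<Rightarrow> nat \<Rightarrow> real. \<forall>j. \<forall>b\<le>k. \<forall>c\<le>k.
     (\<Sum>r=1..k+1. (real r ^ s j) ^ c * l j r b) = (if b = c then 1 else 0)"
proof -
  have "\<forall>j. \<exists>l::nat\<Rightarrow>nat\<Rightarrow>real. \<forall>b\<le>k. \<forall>c\<le>k.
     (\<Sum>r=1..k+1. (real r ^ s j) ^ c * l r b) = (if b = c then 1 else 0)"
  proof
    fix j
    have "inj_on (\<lambda>r. real r ^ s j) {1..k+1}"
    proof (rule inj_onI)
      fix r r' assume "real r ^ s j = real r' ^ s j"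
      moreover have "0 < s j" using s1 by (metis not_one_le_zero neq0_conv)
      ultimately show "r = r'" using power_eq_imp_eq_base[of "real r" "s j" "real r'"] by simp
    qed
    then show "\<exists>l::nat\<Rightarrow>nat\<Rightarrow>real. \<forall>b\<le>k. \<forall>c\<le>k.
     (\<Sum>r=1..k+1. (real r ^ s j) ^ c * l r b) = (if b = c then 1 else 0)"
      by (rule lagrange_dual)
  qed
  then show ?thesis by (rule choice)
qed

lemma inf_approx:
  fixes Pr :: "real \<Rightarrow> bool"
  assumes "Inf {ereal M | M. M > 0 \<and> Pr M} = ereal a" "0 < \<epsilon>"
  shows "\<exists>M. M > 0 \<and> Pr M \<and> M < a + \<epsilon>"
proof -
  have "Inf {ereal M | M. M > 0 \<and> Pr M} < ereal (a + \<epsilon>)" using assms by simp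
  then obtain w where "w \<in> {ereal M | M. M > 0 \<and> Pr M}" "w < ereal (a + \<epsilon>)"
    by (auto simp: Inf_less_iff)
  then show ?thesis by auto
qed

lemma inf_nonneg: "0 \<le> Inf {ereal M | M. M > 0 \<and> Pr M}"
  by (rule Inf_greatest) auto

theorem lemma3p4:
  fixes s :: "'n::finite \<Rightarrow> nat" and \<eta> \<alpha> :: real
  assumes "\<forall>i. 1 \<le> s i" and "0 < \<alpha>" and "\<alpha> < \<eta>" and "\<alpha> \<notin> \<nat>"
  shows "\<exists>C>0. \<forall>(D :: (real^'n) set) (U :: real^'n \<Rightarrow> real^'n \<Rightarrow> complex) (R :: real).
     admissible_domain s D \<and> germ D U \<and> germ_norm s \<eta> D U + germ_semi s \<eta> \<alpha> D U < \<infinity> \<and> R > 0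
     \<longrightarrow> (SUP x\<in>D. holder_semi s \<alpha> (U x) (D \<inter> sball s x R))
           \<le> ereal C * (germ_norm s \<eta> D U + germ_semi s \<eta> \<alpha> D U) * ereal (R powr (\<eta> - \<alpha>))"
proof -
  note s1 = assms(1) and a0 = assms(2) and ae = assms(3)
  define k where "k = nat \<lfloor>\<eta>\<rfloor>"
  obtain l :: "'n \<Rightarrow> nat \<Rightarrow> nat \<Rightarrow> real" where dual0: "\<forall>j. \<forall>b\<le>k. \<forall>c\<le>k.
     (\<Sum>r=1..k+1. (real r ^ s j) ^ c * l j r b) = (if b = c then 1 else 0)"
    using exists_dual[OF s1, of k] by blast
  have dual: "\<And>j b c. b \<le> k \<Longrightarrow> c \<le> k \<Longrightarrow> (\<Sum>r=1..k+1. (real r ^ s j) ^ c * l j r b) = (if b = c then 1 else 0)"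
    using dual0 by blast
  define C where "C = C0c s \<eta> \<alpha> k l"
  define e where "e = \<eta> - \<alpha>"
  have C0: "0 < C"
  proof -
    have "0 \<le> CLc s k l" unfolding CLc_def by (intro sum_nonneg prod_nonneg) auto
    then have "0 \<le> 2 * real (card (Bset s k)) * (1 + real (CARD('n) * (k+1))) powr \<eta> * CLc s k l" by simp
    then show ?thesis unfolding C_def C0c_def by (intro mult_pos_pos) (simp, linarith)
  qed
  show ?thesis
  proof (rule exI[of _ C], intro conjI C0 allI impI)
    fix D :: "(real^'n) set" and U :: "real^'n \<Rightarrow> real^'n \<Rightarrow> complex" and R :: real
    assume H: "admissible_domain s D \<and> germ D U \<and> germ_norm s \<eta> D U + germ_semi s \<eta> \<alpha> D U < \<infinity> \<and> R > 0"
    then have adm: "admissible_domain s D" and fin: "germ_norm s \<eta> D U + germ_semi s \<eta> \<alpha> D U < \<infinity>"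
      and R: "0 < R" by auto
    have gn0: "0 \<le> germ_norm s \<eta> D U" unfolding germ_norm_def by (rule inf_nonneg)
    have gs0: "0 \<le> germ_semi s \<eta> \<alpha> D U" unfolding germ_semi_def by (rule inf_nonneg)
    obtain n0 where n0: "germ_norm s \<eta> D U = ereal n0"
      using gn0 gs0 fin by (cases "germ_norm s \<eta> D U") auto
    obtain s0 where s0: "germ_semi s \<eta> \<alpha> D U = ereal s0"
      using gn0 gs0 fin by (cases "germ_semi s \<eta> \<alpha> D U") auto
    have Re: "0 < R powr e" using R by simp
    have "holder_semi s \<alpha> (U x) (D \<inter> sball s x R) \<le> ereal (C * (n0 + s0) * R powr e)" if xD: "x \<in> D" for x
    proof (rule ereal_le_epsilon2)
      fix \<epsilon> :: real assume ep: "0 < \<epsilon>"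
      define \<epsilon>1 where "\<epsilon>1 = \<epsilon> / (2 * C * R powr e)"
      have ep1: "0 < \<epsilon>1" unfolding \<epsilon>1_def using ep C0 Re by simp
      obtain N' where Np: "N' > 0" and hN: "\<forall>x\<in>D. \<forall>y\<in>D. cmod (U x y) \<le> N' * sdist s x y powr \<eta>"
        and Nlt: "N' < n0 + \<epsilon>1"
        using inf_approx[OF n0[unfolded germ_norm_def] ep1] by blast
      obtain S' where Sp: "S' > 0" and hS: "\<forall>x\<in>D. \<forall>y\<in>D. \<exists>P\<in>spolys s (nat \<lfloor>\<eta>\<rfloor>). \<forall>z\<in>D.
         cmod (U x z - U y z - P z)
           \<le> S' * sdist s y z powr \<alpha> * (sdist s x y + sdist s y z) powr (\<eta> - \<alpha>)"
        and Slt: "S' < s0 + \<epsilon>1"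
        using inf_approx[OF s0[unfolded germ_semi_def] ep1] by blast
      define M where "M = C * (N' + S') * R powr e"
      have M0: "0 < M" unfolding M_def using C0 Np Sp Re by simp
      have "ereal M \<in> {ereal M | M. M > 0 \<and>
        (\<forall>y\<in>D \<inter> sball s x R. \<exists>P\<in>spolys s (nat \<lfloor>\<alpha>\<rfloor>). \<forall>z\<in>D \<inter> sball s x R.
         cmod (U x z - P z) \<le> M * sdist s z y powr \<alpha>)}"
      proof (intro CollectI exI conjI ballI)
        show "0 < M" by (rule M0)
      next
        fix y assume yA: "y \<in> D \<inter> sball s x R"
        then have yD: "y \<in> D" and dxy: "sdist s x y < R" unfolding sball_def by auto
        obtain P where P: "P \<in> spolys s k" and hSP: "\<forall>z\<in>D. cmod (U x z - U y z - P z)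
           \<le> S' * sdist s y z powr \<alpha> * (sdist s x y + sdist s y z) powr (\<eta> - \<alpha>)"
          using hS xD yD unfolding k_def by blast
        obtain Q where Q: "Q \<in> spolys s (nat \<lfloor>\<alpha>\<rfloor>)" and hQ: "\<forall>z\<in>D. sdist s x z < R \<longrightarrow>
            cmod (U x z - Q z) \<le> C0c s \<eta> \<alpha> k l * (N' + S') * R powr (\<eta> - \<alpha>) * sdist s z y powr \<alpha>"
          using pointwise[OF s1 a0 ae dual k_def adm xD yD R dxy Np hN Sp P hSP] by blast
        show "\<exists>P\<in>spolys s (nat \<lfloor>\<alpha>\<rfloor>). \<forall>z\<in>D \<inter> sball s x R. cmod (U x z - P z) \<le> M * sdist s z y powr \<alpha>"
        proof (rule bexI[OF _ Q], intro ballI)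
          fix z assume "z \<in> D \<inter> sball s x R"
          then show "cmod (U x z - Q z) \<le> M * sdist s z y powr \<alpha>"
            using hQ unfolding sball_def M_def C_def e_def by auto
        qed
      qed (rule refl)
      then have "holder_semi s \<alpha> (U x) (D \<inter> sball s x R) \<le> ereal M"
        unfolding holder_semi_def by (rule Inf_lower)
      also have "M \<le> C * (n0 + s0) * R powr e + \<epsilon>"
      proof -
        have "N' + S' \<le> n0 + s0 + 2 * \<epsilon>1" using Nlt Slt by linarith
        then have "M \<le> C * (n0 + s0 + 2 * \<epsilon>1) * R powr e" unfolding M_def
          using C0 Re by (intro mult_right_mono mult_left_mono) auto
        also have "\<dots> = C * (n0 + s0) * R powr e + \<epsilon>"
          unfolding \<epsilon>1_def using C0 Re by (simp add: field_simps)
        finally show ?thesis .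
      qed
      then have "ereal M \<le> ereal (C * (n0 + s0) * R powr e) + ereal \<epsilon>" by simp
      finally show "holder_semi s \<alpha> (U x) (D \<inter> sball s x R) \<le> ereal (C * (n0 + s0) * R powr e) + ereal \<epsilon>" .
    qed
    then have "(SUP x\<in>D. holder_semi s \<alpha> (U x) (D \<inter> sball s x R)) \<le> ereal (C * (n0 + s0) * R powr e)"
      by (intro SUP_least) auto
    also have "\<dots> = ereal C * (germ_norm s \<eta> D U + germ_semi s \<eta> \<alpha> D U) * ereal (R powr (\<eta> - \<alpha>))"
      unfolding n0 s0 e_def by simp
    finally show "(SUP x\<in>D. holder_semi s \<alpha> (U x) (D \<inter> sball s x R))
           \<le> ereal C * (germ_norm s \<eta> D U + germ_semi s \<eta> \<alpha> D U) * ereal (R powr (\<eta> - \<alpha>))" .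
  qed
qed

end
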